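(* For every $n\in\mathbb{N}$, $t\in(0,1)$, $\varepsilon\in(0,1)$ and $\ell\ge1$ there exists $\mu=\mu_{n,t,\varepsilon,\ell}>0$ such that for all $\gamma\ge0$, $\lambda\ge1$ the following holds: if $A,B\subset\mathbb{R}^n$ are $(\gamma,\ell,\lambda,\mu)$ conelike with associated convex sets $C_A,C_B$, then $$tA+(1-t)B\supset t(1-\varepsilon/4)C_A+(1-t)C_B.$$
   Context: Scalar multiples of sets are dilations about the origin, $X+Y$ is the Minkowski sum, $o$ the origin, $B(p,r)$ the open Euclidean ball, $|\cdot|$ Lebesgue measure. A convex set $C\subset\mathbb{R}^n$ is a cone if there are a hyperplane $H$ not containing the origin and a bounded convex set $P\subset H$ with $C=\bigcup_{s\ge0}sP$. Sets $A,B\subset\mathbb{R}^n$ are called $(\gamma,\ell,\lambda,\mu)$ conelike if there exist convex sets $C_A\supset A$, $C_B\supset B$ with $|C_A|=|C_B|=(1+\gamma)|A|=(1+\gamma)|B|$, a convex set $K$, and a set $S''$ obtained by intersecting a cone with a half-space, such that: (1) $B(o,1/\ell)\subset C_A,C_B\subset B(o,\ell)$; (2) for some $z\in\mathbb{R}^n$, each of $A-z$, $C_A-z$, $B-z$, $C_B-z$ contains $S''$ and is contained in $\lambda S''$; (3) for some $x,y\in\mathbb{R}^n$, each of $A+x$, $C_A+x$, $B+y$, $C_B+y$ contains $K$ and is contained in $(1+\mu)K$. *)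

theory Defs
  imports "HOL-Analysis.Analysis"
begin

definition msum :: "'a::real_vector set \<Rightarrow> 'a set \<Rightarrow> 'a set" where
  "msum X Y = {x + y | x y. x \<in> X \<and> y \<in> Y}"

definition dil :: "real \<Rightarrow> 'a::real_vector set \<Rightarrow> 'a set" where
  "dil s X = (\<lambda>x. s *\<^sub>R x) ` X"

definition transl :: "'a::real_vector set \<Rightarrow> 'a \<Rightarrow> 'a set" where
  "transl X v = (\<lambda>x. x + v) ` X"

definition hyperplane_off0 :: "'a::euclidean_space set \<Rightarrow> bool" where
  "hyperplane_off0 H \<longleftrightarrow> (\<exists>a b. a \<noteq> 0 \<and> H = {x. a \<bullet> x = b}) \<and> 0 \<notin> H"

definition is_cone :: "'a::euclidean_space set \<Rightarrow> bool" where
  "is_cone C \<longleftrightarrow> convex C \<and>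
     (\<exists>H P. hyperplane_off0 H \<and> P \<subseteq> H \<and> bounded P \<and> convex P \<and>
            C = (\<Union>s\<in>{0..}. dil s P))"

definition halfspace :: "'a::euclidean_space set \<Rightarrow> bool" where
  "halfspace S \<longleftrightarrow> (\<exists>a b. a \<noteq> 0 \<and> S = {x. a \<bullet> x \<le> b})"

definition cone_cut :: "'a::euclidean_space set \<Rightarrow> bool" where
  "cone_cut S \<longleftrightarrow> (\<exists>C Hs. is_cone C \<and> halfspace Hs \<and> S = C \<inter> Hs)"

definition conelike_with ::
  "real \<Rightarrow> real \<Rightarrow> real \<Rightarrow> real \<Rightarrow> 'a::euclidean_space set \<Rightarrow> 'a set \<Rightarrow> 'a set \<Rightarrow> 'a set \<Rightarrow> bool" where
  "conelike_with \<gamma> l lam \<mu> A B CA CB \<longleftrightarrow>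
     convex CA \<and> convex CB \<and> A \<subseteq> CA \<and> B \<subseteq> CB \<and>
     measure lebesgue CA = (1 + \<gamma>) * measure lebesgue A \<and>
     measure lebesgue CB = (1 + \<gamma>) * measure lebesgue B \<and>
     measure lebesgue A = measure lebesgue B \<and>
     ball 0 (1 / l) \<subseteq> CA \<and> ball 0 (1 / l) \<subseteq> CB \<and>
     CA \<subseteq> ball 0 l \<and> CB \<subseteq> ball 0 l \<and>
     (\<exists>S z. cone_cut S \<and>
        (\<forall>X\<in>{A, CA, B, CB}. S \<subseteq> transl X (- z) \<and> transl X (- z) \<subseteq> dil lam S)) \<and>
     (\<exists>K x y. convex K \<and>
        (\<forall>X\<in>{transl A x, transl CA x, transl B y, transl CB y}.
            K \<subseteq> X \<and> X \<subseteq> dil (1 + \<mu>) K))"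

definition conelike ::
  "real \<Rightarrow> real \<Rightarrow> real \<Rightarrow> real \<Rightarrow> 'a::euclidean_space set \<Rightarrow> 'a set \<Rightarrow> bool" where
  "conelike \<gamma> l lam \<mu> A B \<longleftrightarrow> (\<exists>CA CB. conelike_with \<gamma> l lam \<mu> A B CA CB)"

end

theory Submission
  imports Defs
begin

lemma key:
  fixes K A CA B CB :: "'a::euclidean_space set" and x y :: 'a
    and t c \<delta> \<mu> l :: real
  assumes cK: "convex K"
    and KA: "K \<subseteq> transl A x" and KCA: "K \<subseteq> transl CA x"
    and CAK: "transl CA x \<subseteq> dil (1+\<mu>) K"
    and KB: "K \<subseteq> transl B y" and CBK: "transl CB y \<subseteq> dil (1+\<mu>) K"
    and ballCA: "ball 0 (1/l) \<subseteq> CA" and CAb: "CA \<subseteq> ball 0 l"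
    and l1: "1 \<le> l" and t0: "0 < t" and t1: "t < 1"
    and d0: "0 < \<delta>" and d1: "\<delta> < 1" and dt: "\<delta> < t"
    and mu: "\<mu> = \<delta> / (12 * l^2)" and tc: "t * c = t - \<delta>"
  shows "msum (dil (t * c) CA) (dil (1 - t) CB) \<subseteq> msum (dil t A) (dil (1 - t) B)"
proof
  define d where "d = 1 + \<mu>"
  have l0: "0 < l" using l1 by simp
  have mu0: "0 < \<mu>" using mu d0 l0 by simp
  have mu1: "\<mu> \<le> 1"
  proof -
    have "1 \<le> l^2" using l1 by (simp add: one_le_power)
    then have "12 * l^2 \<ge> 1" by simp
    then show ?thesis using mu d0 d1 by (simp add: divide_le_eq)
  qed
  have dpos: "0 < d" "1 < d" using mu0 d_def by auto
  have dilmem: "z /\<^sub>R d \<in> K" if "z \<in> dil d K" for z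
    using that dpos unfolding dil_def by auto
  have shrink: "k /\<^sub>R d \<in> K" if "k \<in> K" for k
    using dilmem that KCA CAK d_def by auto
  have iter: "k /\<^sub>R (d ^ n) \<in> K" if "k \<in> K" for k n
  proof (induction n)
    case 0 then show ?case using that by simp
  next
    case (Suc n)
    have "(k /\<^sub>R (d ^ n)) /\<^sub>R d \<in> K" using shrink Suc by blast
    then show ?case by (simp add: mult.commute)
  qed
  have Kball: "norm (k - x) < l" if "k \<in> K" for k
  proof -
    from that KCA obtain c0 where "c0 \<in> CA" "k = c0 + x" unfolding transl_def by auto
    then show ?thesis using CAb by auto
  qed
  have x0: "x \<in> transl CA x"
  proof -
    have "0 \<in> CA" using ballCA l0 by auto
    then show ?thesis unfolding transl_def by force
  qed
  define p where "p = x /\<^sub>R d"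
  have pK: "p \<in> K" using dilmem x0 CAK d_def p_def by auto
  obtain n where n: "2 < d ^ n" using real_arch_pow[OF dpos(2)] by blast
  have xb: "norm x < 2 * l"
  proof -
    define D where "D = d * d ^ n"
    have "d ^ n < d * d ^ n" using dpos by simp
    then have D2: "2 < D" using n unfolding D_def by linarith
    have "p /\<^sub>R (d ^ n) \<in> K" using iter pK by blast
    moreover have "p /\<^sub>R (d ^ n) = x /\<^sub>R D" unfolding p_def D_def by simp
    ultimately have "norm (x /\<^sub>R D - x) < l" using Kball by metis
    moreover have "x /\<^sub>R D - x = (1/D - 1) *\<^sub>R x" by (simp add: algebra_simps inverse_eq_divide)
    moreover have "\<bar>1/D - 1\<bar> \<ge> 1/2" using D2 by (simp add: field_simps)
    moreover have "(1/2) * norm x \<le> \<bar>1/D - 1\<bar> * norm x"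
      by (rule mult_right_mono) (use \<open>\<bar>1/D - 1\<bar> \<ge> 1/2\<close> in auto)
    ultimately have "(1/2) * norm x < l" by simp
    then show ?thesis by simp
  qed
  have pn: "norm p = norm x * (1 / d)" unfolding p_def using dpos by (simp add: divide_inverse)
  have "norm x * (1 / d) \<le> norm x * 1"
    by (rule mult_left_mono) (use dpos in auto)
  then have pb: "norm p < 2 * l" using xb pn by linarith
  define r where "r = 1 / (l * d)"
  have ballK: "z \<in> K" if "norm (z - p) < r" for z
  proof -
    have dpx: "d *\<^sub>R p = x" unfolding p_def using dpos by simp
    have "d *\<^sub>R z - x = d *\<^sub>R (z - p)" using dpx by (simp add: algebra_simps)
    then have "norm (d *\<^sub>R z - x) = d * norm (z - p)" using dpos by simp
    also have "\<dots> < d * r" using that dpos by simp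
    also have "\<dots> = 1 / l" unfolding r_def using dpos l0 by simp
    finally have "d *\<^sub>R z - x \<in> CA" using ballCA by auto
    then have "d *\<^sub>R z \<in> transl CA x" unfolding transl_def
      by (metis (no_types, lifting) diff_add_cancel image_eqI)
    then have "d *\<^sub>R z \<in> dil d K" using CAK d_def by auto
    then have "(d *\<^sub>R z) /\<^sub>R d \<in> K" by (rule dilmem)
    then show ?thesis using dpos by simp
  qed
  fix w assume "w \<in> msum (dil (t * c) CA) (dil (1 - t) CB)"
  then obtain a b where ab: "a \<in> CA" "b \<in> CB" "w = (t - \<delta>) *\<^sub>R a + (1 - t) *\<^sub>R b"
    unfolding msum_def dil_def tc by auto
  define u where "u = (a + x) /\<^sub>R d"
  define v where "v = (b + y) /\<^sub>R d"
  have uK: "u \<in> K" unfolding u_def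
    using dilmem CAK d_def ab(1) unfolding transl_def by auto
  have vK: "v \<in> K" unfolding v_def
    using dilmem CBK d_def ab(2) unfolding transl_def by auto
  define m where "m = ((t - \<delta>)/(1-\<delta>)) *\<^sub>R u + ((1-t)/(1-\<delta>)) *\<^sub>R v"
  have mK: "m \<in> K" unfolding m_def
  proof (rule convexD[OF cK uK vK])
    show "0 \<le> (t - \<delta>) / (1 - \<delta>)" using dt d1 by simp
    show "0 \<le> (1 - t) / (1 - \<delta>)" using t1 d1 by simp
    show "(t - \<delta>) / (1 - \<delta>) + (1 - t) / (1 - \<delta>) = 1" using d1 by (simp add: field_simps)
  qed
  have mb: "norm m < 3 * l"
    using Kball[OF mK] xb norm_triangle_sub[of m x] by linarith
  define e where "e = (\<mu> * (1-\<delta>) / \<delta>) *\<^sub>R m + \<mu> *\<^sub>R p"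
  have eb: "norm e < r"
  proof -
    have "norm e \<le> (\<mu> * (1-\<delta>) / \<delta>) * norm m + \<mu> * norm p"
    proof -
      have c0: "0 \<le> \<mu> * (1-\<delta>) / \<delta>" using mu0 d0 d1 by simp
      have "norm e \<le> norm ((\<mu> * (1-\<delta>) / \<delta>) *\<^sub>R m) + norm (\<mu> *\<^sub>R p)"
        unfolding e_def by (rule norm_triangle_ineq)
      also have "\<dots> = (\<mu> * (1-\<delta>) / \<delta>) * norm m + \<mu> * norm p"
        using c0 mu0 by (simp only: norm_scaleR abs_of_nonneg abs_of_pos)
      finally show ?thesis .
    qed
    also have "\<dots> \<le> (\<mu> / \<delta>) * (3 * l) + \<mu> * (2 * l)"
    proof (rule add_mono)
      have "(\<mu> * (1-\<delta>) / \<delta>) \<le> \<mu> / \<delta>" using mu0 d0 d1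
        by (simp add: divide_right_mono mult_left_le)
      then show "(\<mu> * (1-\<delta>) / \<delta>) * norm m \<le> (\<mu> / \<delta>) * (3 * l)"
        by (rule mult_mono) (use mb mu0 d0 in auto)
      show "\<mu> * norm p \<le> \<mu> * (2 * l)" using pb mu0 by simp
    qed
    also have "\<dots> = 1 / (4 * l) + \<delta> / (6 * l)"
      unfolding mu using d0 l0 by (simp add: field_simps power2_eq_square)
    also have "\<dots> < 1 / (2 * l)"
      using d1 l0 by (simp add: field_simps)
    also have "\<dots> \<le> r"
    proof -
      have "l * \<mu> \<le> l * 1" using mu1 l0 by (intro mult_left_mono) auto
      then have "l * d \<le> 2 * l" unfolding d_def by (simp add: algebra_simps)
      then show ?thesis unfolding r_def using l0 dpos
        by (intro divide_left_mono) auto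
    qed
    finally show ?thesis .
  qed
  have peK: "p + e \<in> K" using ballK eb by simp
  define k where "k = (1 - \<delta>) *\<^sub>R m + \<delta> *\<^sub>R (p + e)"
  have kK: "k \<in> K" unfolding k_def
    using convexD[OF cK mK peK, of "1-\<delta>" \<delta>] d0 d1 by simp
  have m1: "(1 - \<delta>) *\<^sub>R m = (t - \<delta>) *\<^sub>R u + (1 - t) *\<^sub>R v"
  proof -
    have c1: "(1-\<delta>)*((t-\<delta>)/(1-\<delta>)) = t-\<delta>" "(1-\<delta>)*((1-t)/(1-\<delta>)) = 1-t"
      using d1 by auto
    show ?thesis unfolding m_def scaleR_add_right scaleR_scaleR c1 ..
  qed
  have dp: "(\<delta> * d) *\<^sub>R p = \<delta> *\<^sub>R x" unfolding p_def using dpos by simp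
  have "\<delta> *\<^sub>R (p + e) = (\<delta> * d) *\<^sub>R p + \<mu> *\<^sub>R ((1 - \<delta>) *\<^sub>R m)"
  proof -
    have c2: "\<delta> * (\<mu> * (1-\<delta>) / \<delta>) = \<mu> * (1-\<delta>)" using d0 by simp
    show ?thesis unfolding e_def d_def scaleR_add_right scaleR_scaleR c2
      by (simp add: algebra_simps)
  qed
  then have "k = (1 - \<delta>) *\<^sub>R m + \<delta> *\<^sub>R x + \<mu> *\<^sub>R ((1 - \<delta>) *\<^sub>R m)"
    unfolding k_def dp by simp
  also have "\<dots> = d *\<^sub>R ((1 - \<delta>) *\<^sub>R m) + \<delta> *\<^sub>R x"
    unfolding d_def by (simp add: algebra_simps)
  also have "\<dots> = (t - \<delta>) *\<^sub>R (a + x) + (1 - t) *\<^sub>R (b + y) + \<delta> *\<^sub>R x"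
  proof -
    have du: "d *\<^sub>R u = a + x" unfolding u_def using dpos by simp
    have dv: "d *\<^sub>R v = b + y" unfolding v_def using dpos by simp
    have "d *\<^sub>R ((t - \<delta>) *\<^sub>R u + (1 - t) *\<^sub>R v)
        = (t - \<delta>) *\<^sub>R (d *\<^sub>R u) + (1 - t) *\<^sub>R (d *\<^sub>R v)"
      by (simp add: algebra_simps)
    then show ?thesis unfolding m1 du dv by simp
  qed
  finally have keq: "k = w + t *\<^sub>R x + (1 - t) *\<^sub>R y"
    unfolding ab(3) by (simp add: algebra_simps)
  have kA: "k - x \<in> A" using kK KA unfolding transl_def by auto
  have kB: "k - y \<in> B" using kK KB unfolding transl_def by auto
  have weq: "w = t *\<^sub>R (k - x) + (1 - t) *\<^sub>R (k - y)"
    unfolding keq by (simp add: algebra_simps)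
  have w1: "t *\<^sub>R (k - x) \<in> dil t A" unfolding dil_def using kA by (rule imageI)
  have w2: "(1 - t) *\<^sub>R (k - y) \<in> dil (1 - t) B" unfolding dil_def using kB by (rule imageI)
  show "w \<in> msum (dil t A) (dil (1 - t) B)"
    unfolding msum_def using w1 w2 weq by blast
qed

theorem mainTheorem14:
  fixes t \<epsilon> l :: real
  assumes "0 < t" "t < 1" "0 < \<epsilon>" "\<epsilon> < 1" "1 \<le> l"
  shows "\<exists>\<mu>>0. \<forall>\<gamma> lam (A::'a::euclidean_space set) B CA CB.
           0 \<le> \<gamma> \<longrightarrow> 1 \<le> lam \<longrightarrow> conelike_with \<gamma> l lam \<mu> A B CA CB \<longrightarrow>
           msum (dil (t * (1 - \<epsilon> / 4)) CA) (dil (1 - t) CB)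
             \<subseteq> msum (dil t A) (dil (1 - t) B)"
proof (intro exI conjI allI impI)
  define \<delta> where "\<delta> = t * \<epsilon> / 4"
  have da: "0 < \<delta>" unfolding \<delta>_def using assms by simp
  have "t * (\<epsilon> / 4) < t * 1" using assms by (intro mult_strict_left_mono) auto
  then have dc: "\<delta> < t" unfolding \<delta>_def by simp
  have d0: "0 < \<delta>" "\<delta> < 1" "\<delta> < t" using da dc assms by auto
  show "0 < \<delta> / (12 * l^2)" using d0 assms by simp
  fix \<gamma> lam and A B CA CB :: "'a set"
  assume H: "conelike_with \<gamma> l lam (\<delta> / (12 * l^2)) A B CA CB"
  have b1: "ball 0 (1 / l) \<subseteq> CA"
    using H unfolding conelike_with_def by (elim conjE) assumption
  have b2: "CA \<subseteq> ball 0 l"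
    using H unfolding conelike_with_def by (elim conjE) assumption
  note b = b1 b2
  have "\<exists>K x y. convex K \<and>
        (\<forall>X\<in>{transl A x, transl CA x, transl B y, transl CB y}.
            K \<subseteq> X \<and> X \<subseteq> dil (1 + \<delta> / (12 * l^2)) K)"
    using H unfolding conelike_with_def by (elim conjE) assumption
  then obtain K x y where K: "convex K"
    "\<forall>X\<in>{transl A x, transl CA x, transl B y, transl CB y}.
            K \<subseteq> X \<and> X \<subseteq> dil (1 + \<delta> / (12 * l^2)) K"
    by (elim exE conjE)
  show "msum (dil (t * (1 - \<epsilon> / 4)) CA) (dil (1 - t) CB) \<subseteq> msum (dil t A) (dil (1 - t) B)"
  proof (rule key[OF K(1) _ _ _ _ _ b assms(5) assms(1,2) d0 refl])
    show "K \<subseteq> transl A x" using K(2) by blast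
    show "K \<subseteq> transl CA x" using K(2) by blast
    show "K \<subseteq> transl B y" using K(2) by blast
    show "transl CA x \<subseteq> dil (1 + \<delta> / (12 * l\<^sup>2)) K" using K(2) by blast
    show "transl CB y \<subseteq> dil (1 + \<delta> / (12 * l\<^sup>2)) K" using K(2) by blast
    show "t * (1 - \<epsilon> / 4) = t - \<delta>" unfolding \<delta>_def by (simp add: algebra_simps)
  qed
qed

end
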